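(* Let $n$ be fixed and let $\nu_1^\star,\dots,\nu_n^\star\in\mathcal V$ and $\theta^\star=(\theta_1^\star,\dots,\theta_n^\star)$ be fixed (frequentist frame). Suppose Assumptions 1, 2 and 3 hold, and that for every $i\in\mathcal H_0$ and every $\delta>0$, $$\mathbb E_{\nu^\star}\Big[\Pi\big(\nu_i: d(\nu_i,\nu_i^\star)>\delta\mid U_1^K,\dots,U_n^K\big)\Big]\to0\quad\text{as }K\to\infty,$$ where $\Pi(\cdot\mid U_1^K,\dots,U_n^K)$ denotes the posterior of $\nu_i$ under the hierarchical model. Then $$\limsup_{K\to\infty}\max_{i\in\mathcal H_0}\sup_{\alpha\in[0,1]}\big|\mathbb P_{\nu^\star,\theta^\star}(P_i\le\alpha)-\alpha\big|=0.$$
   Context: Setup: for units $i=1,\dots,n$ with data depending on an information parameter $K\in\mathbb N$, the data of unit $i$ are summarized by a test statistic $T_i=T_i^K\in\mathbb R$ and a nuisance parameter statistic $U_i=U_i^K\in\mathcal U^K$ (the space may depend on $K$). Unit $i$ has a primary parameter $\theta_i$ and a nuisance parameter $\nu_i\in\mathcal V$ (not depending on $K$). Conditionally on parameters, the pairs $(T_i,U_i)$ are independent across $i$, the law of $(T_i,U_i)$ depends only on $(\theta_i,\nu_i)$, and the law of $U_i$ depends only on $\nu_i$. The hierarchical model used for inference posits $\nu_i\mid G$ i.i.d. $G$, $G\sim\Pi$. A null value $\theta_0$ is fixed, $\mathcal H_0=\{i:\theta_i^\star=\theta_0\}$. Partially Bayes p-value: $P_i:=\mathfrak P_i(T_i,(U_1,\dots,U_n);\Pi)$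 where $\mathfrak P_i(t,(u_1,\dots,u_n);\Pi):=\mathbb P_\Pi(|T_i|\ge|t|\mid U_1=u_1,\dots,U_n=u_n)$ under the joint hierarchical law with $\theta_i=\theta_0$. Oracle p-value function: $P^{\mathrm{or}}_K(t,u,\nu):=\mathbb P(|T_i^K|\ge|t|\mid U_i^K=u,\nu_i=\nu)$ under $\theta_i=\theta_0$. $\mathbb P_{\nu^\star,\theta^\star}$, $\mathbb E_{\nu^\star}$ denote probability/expectation with all parameters fixed at $\nu^\star,\theta^\star$ and only the data random. Assumption 1: for all $\nu,u$, the conditional law of $T_i$ given $\nu_i=\nu,U_i=u$ (under $\theta_i=\theta_0$) is absolutely continuous w.r.t. Lebesgue measure. Assumption 2: $\mathcal V$ is a compact metric space with metric $d$. Assumption 3: the family of functions $\nu\mapsto P^{\mathrm{or}}_K(t^K,u^K,\nu)$ from $\mathcal V$ to $[0,1]$, indexed by $K\in\mathbb N$, $t^K\in\mathbb R$, $u^K\in\mathcal U^K$, is uniformly equicontinuous. *)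

theory Defs
  imports "HOL-Probability.Probability"
begin

text \<open>Oracle p-value function: P(|T| >= |t| | U = u, nu) under theta = theta0,
  computed from the conditional law condT K nu u of T given (nu, U = u).\<close>
definition oracle_pval :: "(nat \<Rightarrow> 'v \<Rightarrow> 'u \<Rightarrow> real measure) \<Rightarrow> nat \<Rightarrow> real \<Rightarrow> 'u \<Rightarrow> 'v \<Rightarrow> real" where
  "oracle_pval condT K t u \<nu> = measure (condT K \<nu> u) {s. \<bar>t\<bar> \<le> \<bar>s\<bar>}"

text \<open>Law of U_i given nu_i (it does not depend on theta_i).\<close>
definition Umarg :: "(nat \<Rightarrow> 'th \<Rightarrow> 'v \<Rightarrow> (real \<times> 'u) measure) \<Rightarrow> (nat \<Rightarrow> 'u measure) \<Rightarrow> 'th \<Rightarrow> nat \<Rightarrow> 'v \<Rightarrow> 'u measure" where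
  "Umarg kern MU \<theta>0 K \<nu> = distr (kern K \<theta>0 \<nu>) (MU K) snd"

definition hier_prior :: "'v measure measure \<Rightarrow> nat \<Rightarrow> (nat \<Rightarrow> 'v) measure" where
  "hier_prior Prior n = Prior \<bind> (\<lambda>G. PiM {..<n} (\<lambda>_. G))"

definition hier_margU :: "(nat \<Rightarrow> 'th \<Rightarrow> 'v \<Rightarrow> (real \<times> 'u) measure) \<Rightarrow> (nat \<Rightarrow> 'u measure) \<Rightarrow> 'th
    \<Rightarrow> 'v measure measure \<Rightarrow> nat \<Rightarrow> nat \<Rightarrow> (nat \<Rightarrow> 'u) measure" where
  "hier_margU kern MU \<theta>0 Prior n K =
     hier_prior Prior n \<bind> (\<lambda>\<nu>. PiM {..<n} (\<lambda>j. Umarg kern MU \<theta>0 K (\<nu> j)))"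

definition is_posterior_version :: "(nat \<Rightarrow> 'th \<Rightarrow> 'v \<Rightarrow> (real \<times> 'u) measure) \<Rightarrow> (nat \<Rightarrow> 'u measure) \<Rightarrow> 'th
    \<Rightarrow> 'v measure \<Rightarrow> 'v measure measure \<Rightarrow> nat \<Rightarrow> nat \<Rightarrow> nat \<Rightarrow> ((nat \<Rightarrow> 'u) \<Rightarrow> 'v measure) \<Rightarrow> bool" where
  "is_posterior_version kern MU \<theta>0 MV Prior n K i post \<longleftrightarrow>
     post \<in> PiM {..<n} (\<lambda>_. MU K) \<rightarrow>\<^sub>M prob_algebra MV \<and>
     (\<forall>A \<in> sets MV. \<forall>B \<in> sets (PiM {..<n} (\<lambda>_. MU K)).
        (\<integral>\<^sup>+ \<nu>. indicator A (\<nu> i) * emeasure (PiM {..<n} (\<lambda>j. Umarg kern MU \<theta>0 K (\<nu> j))) B \<partial>hier_prior Prior n)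
      = (\<integral>\<^sup>+ u. indicator B u * emeasure (post u) A \<partial>hier_margU kern MU \<theta>0 Prior n K))"

text \<open>Partially Bayes p-value function P_Pi(|T_i| >= |t| | U = u), in the version induced by the
  posterior version post of nu_i and the oracle conditional law of T_i given (nu_i, U_i).\<close>
definition pB_pval :: "(nat \<Rightarrow> 'v \<Rightarrow> 'u \<Rightarrow> real measure) \<Rightarrow> ((nat \<Rightarrow> 'u) \<Rightarrow> 'v measure) \<Rightarrow> nat \<Rightarrow> nat
    \<Rightarrow> real \<Rightarrow> (nat \<Rightarrow> 'u) \<Rightarrow> real" where
  "pB_pval condT post K i t u = (\<integral>\<nu>. oracle_pval condT K t (u i) \<nu> \<partial>post u)"

definition data_law :: "(nat \<Rightarrow> 'th \<Rightarrow> 'v \<Rightarrow> (real \<times> 'u) measure) \<Rightarrow> nat \<Rightarrow> (nat \<Rightarrow> 'th) \<Rightarrow> (nat \<Rightarrow> 'v)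
    \<Rightarrow> nat \<Rightarrow> (nat \<Rightarrow> real \<times> 'u) measure" where
  "data_law kern n \<theta>s \<nu>s K = PiM {..<n} (\<lambda>j. kern K (\<theta>s j) (\<nu>s j))"

definition Uvec :: "nat \<Rightarrow> (nat \<Rightarrow> real \<times> 'u) \<Rightarrow> nat \<Rightarrow> 'u" where
  "Uvec n \<omega> = (\<lambda>j\<in>{..<n}. snd (\<omega> j))"

end

theory Submission
  imports Defs
begin



lemma uniform_pval:
  fixes \<mu> :: "real measure" and \<alpha> :: real
  assumes P: "prob_space \<mu>" and S: "sets \<mu> = sets borel"
    and AC: "absolutely_continuous lborel \<mu>" and a0: "0 \<le> \<alpha>" and a1: "\<alpha> \<le> 1"
  shows "measure \<mu> {t. measure \<mu> {s. \<bar>t\<bar> \<le> \<bar>s\<bar>} \<le> \<alpha>} = \<alpha>"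
proof -
  interpret prob_space \<mu> by fact
  have sp: "space \<mu> = UNIV" using sets_eq_imp_space_eq[OF S] by simp
  have absm: "abs \<in> measurable \<mu> borel" by (subst measurable_cong_sets[OF S refl]) simp
  define N where "N = distr \<mu> borel abs"
  interpret N: real_distribution N
    unfolding real_distribution_def real_distribution_axioms_def N_def
    using prob_space_distr[OF absm] by simp
  have SN: "measure \<mu> {s. x \<le> \<bar>s\<bar>} = measure N {x..}" for x
    unfolding N_def by (subst measure_distr) (auto simp: absm sp vimage_def)
  have atom: "measure N {x} = 0" for x
  proof -
    have "measure N {x} = measure \<mu> {s. \<bar>s\<bar> = x}"
      unfolding N_def by (subst measure_distr) (auto simp: absm sp vimage_def)
    also have "{s. \<bar>s\<bar> = x} \<in> null_sets lborel"
    proof (rule null_sets_subset)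
      show "{x, -x} \<in> null_sets lborel" by (simp add: countable_imp_null_set_lborel)
    qed auto
    then have "{s. \<bar>s\<bar> = x} \<in> null_sets \<mu>" using AC unfolding absolutely_continuous_def by auto
    then have "measure \<mu> {s. \<bar>s\<bar> = x} = 0" by (simp add: measure_eq_0_null_sets)
    finally show ?thesis .
  qed
  define F where "F x = measure \<mu> {s. x \<le> \<bar>s\<bar>}" for x
  have Fc: "F x = 1 - cdf N x" for x
  proof -
    have "measure N {x..} = measure N ({x} \<union> {x<..})" by (rule arg_cong[where f="measure N"]) auto
    also have "\<dots> = measure N {x<..}" using atom[of x] N.finite_measure_Union[of "{x}" "{x<..}"] by auto
    also have "\<dots> = 1 - cdf N x" unfolding cdf_def
      using N.prob_compl[of "{..x}"] by (auto simp: N.space_eq_univ Compl_eq_Diff_UNIV[symmetric] compl_le_swap2 not_le)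
    finally show ?thesis using SN F_def by simp
  qed
  have cont: "isCont F x" for x unfolding Fc[abs_def] using N.isCont_cdf atom by (intro continuous_intros) auto
  have lim: "(F \<longlongrightarrow> 0) at_top" unfolding Fc[abs_def]
    using tendsto_diff[OF tendsto_const[of 1] N.cdf_lim_at_top_prob] by simp
  have mono: "x \<le> y \<Longrightarrow> F y \<le> F x" for x y
    unfolding F_def by (rule finite_measure_mono) (auto simp: S)
  have F0: "x \<le> 0 \<Longrightarrow> F x = 1" for x
  proof -
    assume "x \<le> 0"
    then have "{s. x \<le> \<bar>s\<bar>} = space \<mu>" by (auto simp: sp)
    then show ?thesis unfolding F_def using prob_space by simp
  qed
  have Fnn: "0 \<le> F x" for x unfolding F_def by simp
  have eqset: "{t. measure \<mu> {s. \<bar>t\<bar> \<le> \<bar>s\<bar>} \<le> \<alpha>} = {t. \<bar>t\<bar> \<in> {x. F x \<le> \<alpha>}}"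
    unfolding F_def by simp
  show ?thesis
  proof (cases "\<alpha> = 1")
    case True
    have "{t. measure \<mu> {s. \<bar>t\<bar> \<le> \<bar>s\<bar>} \<le> \<alpha>} = space \<mu>" using True by (auto simp: sp)
    then show ?thesis using True prob_space by simp
  next
    case False
    define L where "L = {x. F x \<le> \<alpha>}"
    show ?thesis
    proof (cases "L = {}")
      case True
      then have "\<alpha> = 0"
      proof -
        { assume "\<alpha> > 0"
          with lim have "eventually (\<lambda>x. F x < \<alpha>) at_top" by (rule order_tendstoD)
          then obtain x where "F x < \<alpha>" by (metis eventually_at_top_linorder order_refl)
          then have False using True L_def by (metis (mono_tags) empty_iff less_imp_le mem_Collect_eq) }
        then show ?thesis using a0 by fastforce
      qed
      then show ?thesis using True unfolding eqset L_def by simp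
    next
      case False
      have cl: "closed L" unfolding L_def
        by (rule closed_Collect_le) (auto intro: continuous_at_imp_continuous_on cont)
      have bdd: "bdd_below L" unfolding bdd_below_def L_def
        using F0 \<open>\<alpha> \<noteq> 1\<close> a1 by (intro exI[of _ 0]) (auto, metis linorder_not_le less_le)
      define c where "c = Inf L"
      have cL: "c \<in> L" unfolding c_def by (rule closed_contains_Inf[OF False bdd cl])
      have Lc: "L = {c..}"
      proof safe
        fix x assume "x \<in> L" then show "c \<le> x" unfolding c_def using bdd by (simp add: cInf_lower)
      next
        fix x assume "c \<le> x" then show "x \<in> L" using mono[of c x] cL unfolding L_def by auto
      qed
      have Fc_eq: "F c = \<alpha>"
      proof (rule ccontr)
        assume "F c \<noteq> \<alpha>"
        then have lt: "F c < \<alpha>" using cL L_def by auto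
        then have c0: "c > 0" using F0[of c] \<open>\<alpha> \<noteq> 1\<close> a1 by force
        have "eventually (\<lambda>x. F x < \<alpha>) (at c)" using cont[of c] lt
          unfolding isCont_def by (rule order_tendstoD)
        then obtain d where d: "d > 0" "\<And>x. x \<noteq> c \<Longrightarrow> dist x c < d \<Longrightarrow> F x < \<alpha>"
          unfolding eventually_at by auto
        have "F (c - d/2) < \<alpha>" using d by (intro d(2)) (auto simp: dist_real_def)
        then have "c - d/2 \<in> L" unfolding L_def by simp
        then show False using Lc d by auto
      qed
      have "{t. \<bar>t\<bar> \<in> L} = {s. c \<le> \<bar>s\<bar>}" using Lc by auto
      then show ?thesis unfolding eqset L_def[symmetric] using Fc_eq F_def by simp
    qed
  qed
qed


lemma disint_ext:
  fixes kk :: "(real \<times> 'u) measure" and MK :: "'u measure" and c :: "'u \<Rightarrow> real measure"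
  assumes kk: "kk \<in> space (prob_algebra (borel \<Otimes>\<^sub>M MK))"
    and c: "c \<in> MK \<rightarrow>\<^sub>M prob_algebra borel"
    and rect: "\<And>A B. A \<in> sets borel \<Longrightarrow> B \<in> sets MK \<Longrightarrow>
       emeasure kk (A \<times> B) = (\<integral>\<^sup>+ u. indicator B u * emeasure (c u) A \<partial>distr kk MK snd)"
    and E: "E \<in> sets (borel \<Otimes>\<^sub>M MK)"
  shows "emeasure kk E = (\<integral>\<^sup>+ u. emeasure (c u) {t. (t, u) \<in> E} \<partial>distr kk MK snd)"
proof -
  have kks: "sets kk = sets (borel \<Otimes>\<^sub>M MK)" and kkp: "prob_space kk"
    using kk by (auto simp: space_prob_algebra)
  interpret prob_space kk by (rule kkp)
  have snd_m: "snd \<in> measurable kk MK" by (subst measurable_cong_sets[OF kks refl]) simp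
  define U where "U = distr kk MK snd"
  have Up: "prob_space U" unfolding U_def by (rule prob_space_distr[OF snd_m])
  have Us: "space U = space MK" unfolding U_def by simp
  have ne: "space MK \<noteq> {}" using Up Us prob_space.not_empty by fastforce
  have cs: "c \<in> MK \<rightarrow>\<^sub>M subprob_algebra borel" by (rule measurable_prob_algebraD[OF c])
  define k where "k u = distr (c u) (borel \<Otimes>\<^sub>M MK) (\<lambda>t. (t, u))" for u
  have km: "k \<in> U \<rightarrow>\<^sub>M subprob_algebra (borel \<Otimes>\<^sub>M MK)"
  proof -
    have "(\<lambda>u. distr (c u) (borel \<Otimes>\<^sub>M MK) (\<lambda>t. (t, u))) \<in> MK \<rightarrow>\<^sub>M subprob_algebra (borel \<Otimes>\<^sub>M MK)"
      by (rule measurable_distr2[where M=borel, OF _ cs]) measurable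
    moreover have "sets U = sets MK" unfolding U_def by simp
    ultimately show ?thesis unfolding k_def using measurable_cong_sets by blast
  qed
  define Q where "Q = U \<bind> k"
  have cu: "u \<in> space MK \<Longrightarrow> sets (c u) = sets borel \<and> prob_space (c u)" for u
    using measurable_space[OF c] by (auto simp: space_prob_algebra)
  have Qe: "X \<in> sets (borel \<Otimes>\<^sub>M MK) \<Longrightarrow> emeasure Q X = (\<integral>\<^sup>+ u. emeasure (c u) {t. (t, u) \<in> X} \<partial>U)" for X
    unfolding Q_def
    apply (subst emeasure_bind[OF _ km])
      apply (simp add: Us ne)
     apply assumption
    apply (rule nn_integral_cong)
  proof -
    fix u assume X: "X \<in> sets (borel \<Otimes>\<^sub>M MK)" and u: "u \<in> space U"
    then have u': "u \<in> space MK" using Us by simp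
    have sp: "space (c u) = UNIV" using cu[OF u'] sets_eq_imp_space_eq by fastforce
    have m: "(\<lambda>t. (t, u)) \<in> measurable (c u) (borel \<Otimes>\<^sub>M MK)"
      using u' by (subst measurable_cong_sets[OF conjunct1[OF cu[OF u']] refl]) simp
    show "emeasure (k u) X = emeasure (c u) {t. (t, u) \<in> X}"
      unfolding k_def by (subst emeasure_distr[OF m X]) (simp add: sp vimage_def)
  qed
  have "kk = Q"
  proof (rule measure_eqI_generator_eq[OF Int_stable_pair_measure_generator[of borel MK]])
    show "{a \<times> b |a b. a \<in> sets borel \<and> b \<in> sets MK} \<subseteq> Pow (space borel \<times> space MK)"
      using sets.sets_into_space by fastforce
    show "sets kk = sigma_sets (space borel \<times> space MK) {a \<times> b |a b. a \<in> sets borel \<and> b \<in> sets MK}"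
      using kks sets_pair_measure by metis
    show "sets Q = sigma_sets (space borel \<times> space MK) {a \<times> b |a b. a \<in> sets borel \<and> b \<in> sets MK}"
    proof -
      have "sets Q = sets (borel \<Otimes>\<^sub>M MK)" unfolding Q_def
        by (rule sets_bind) (auto simp: k_def Us ne)
      then show ?thesis using sets_pair_measure by metis
    qed
    fix X :: "(real \<times> 'u) set" assume "X \<in> {a \<times> b |a b. a \<in> sets borel \<and> b \<in> sets MK}"
    then obtain A B where X: "X = A \<times> B" "A \<in> sets borel" "B \<in> sets MK" by auto
    have Xs: "X \<in> sets (borel \<Otimes>\<^sub>M MK)" using X by auto
    have "emeasure Q X = (\<integral>\<^sup>+ u. indicator B u * emeasure (c u) A \<partial>U)"
      unfolding Qe[OF Xs]
      by (rule nn_integral_cong) (auto simp: X(1) indicator_def)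
    then show "emeasure kk X = emeasure Q X" using rect[OF X(2,3)] X(1) U_def by simp
  next
    show "range (\<lambda>_. space borel \<times> space MK) \<subseteq> {a \<times> b |a b. a \<in> sets borel \<and> b \<in> sets MK}" by blast
  qed auto
  then show ?thesis using Qe[OF E] U_def by simp
qed


lemma finite_net:
  fixes V :: "'v::metric_space set"
  assumes "compact V" "V \<noteq> {}" "r > 0"
  shows "\<exists>cs. cs \<noteq> [] \<and> set cs \<subseteq> V \<and> (\<forall>\<nu>\<in>V. \<exists>k<length cs. dist \<nu> (cs!k) < r)"
proof -
  have "V \<subseteq> (\<Union>c\<in>V. ball c r)" using assms(3) by auto
  then obtain C where C: "C \<subseteq> V" "finite C" "V \<subseteq> (\<Union>c\<in>C. ball c r)"
    using compactE_image[OF assms(1), of V "\<lambda>c. ball c r"] by auto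
  obtain cs where cs: "set cs = C" using finite_list[OF C(2)] by auto
  have "cs \<noteq> []" using cs C(3) assms(2) by auto
  moreover have "\<forall>\<nu>\<in>V. \<exists>k<length cs. dist \<nu> (cs!k) < r"
  proof
    fix \<nu> assume "\<nu> \<in> V"
    then obtain c where "c \<in> C" "dist c \<nu> < r" using C(3) by auto
    then obtain k where "k < length cs" "cs!k = c" using cs by (metis in_set_conv_nth)
    then show "\<exists>k<length cs. dist \<nu> (cs!k) < r" using \<open>dist c \<nu> < r\<close> by (auto simp: dist_commute)
  qed
  ultimately show ?thesis using cs C(1) by auto
qed

lemma joint_meas:
  fixes g :: "'x \<Rightarrow> 'v::metric_space \<Rightarrow> real" and M :: "'x measure" and V :: "'v set"
  assumes V: "compact V" "V \<noteq> {}"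
    and meas: "\<And>c. c \<in> V \<Longrightarrow> (\<lambda>x. g x c) \<in> borel_measurable M"
    and cont: "\<And>x. x \<in> space M \<Longrightarrow> continuous_on V (g x)"
  shows "(\<lambda>(x, \<nu>). g x \<nu>) \<in> borel_measurable (M \<Otimes>\<^sub>M restrict_space borel V)"
proof -
  have "\<forall>m. \<exists>cs. cs \<noteq> [] \<and> set cs \<subseteq> V \<and> (\<forall>\<nu>\<in>V. \<exists>k<length cs. dist \<nu> (cs!k) < 1 / Suc m)"
    using finite_net[OF V] by simp
  then obtain CS where CS: "\<And>m. CS m \<noteq> []" "\<And>m. set (CS m) \<subseteq> V"
    "\<And>m \<nu>. \<nu> \<in> V \<Longrightarrow> \<exists>k<length (CS m). dist \<nu> (CS m ! k) < 1 / Suc m"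
    by metis
  define sel where "sel m \<nu> = min (LEAST k. dist \<nu> (CS m ! k) < 1 / Suc m) (length (CS m) - 1)" for m \<nu>
  have sel: "\<nu> \<in> V \<Longrightarrow> dist \<nu> (CS m ! sel m \<nu>) < 1 / Suc m" for m \<nu>
  proof -
    assume "\<nu> \<in> V"
    then obtain k where k: "k < length (CS m)" "dist \<nu> (CS m ! k) < 1 / Suc m" using CS(3) by blast
    let ?l = "LEAST k. dist \<nu> (CS m ! k) < 1 / Suc m"
    have "?l \<le> k" "dist \<nu> (CS m ! ?l) < 1 / Suc m" using k by (auto intro: Least_le LeastI)
    then have "sel m \<nu> = ?l" unfolding sel_def using k by simp
    then show ?thesis using \<open>dist \<nu> (CS m ! ?l) < 1 / Suc m\<close> by simp
  qed
  have selV: "CS m ! sel m \<nu> \<in> V" for m \<nu>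
    using CS(1,2)[of m] unfolding sel_def
    by (metis (no_types, lifting) One_nat_def diff_less length_greater_0_conv less_one min.strict_coboundedI2 nth_mem subsetD)
  let ?MV = "restrict_space borel V"
  define h where "h m = (\<lambda>(x, \<nu>). g x (CS m ! sel m \<nu>))" for m
  have hm: "h m \<in> borel_measurable (M \<Otimes>\<^sub>M ?MV)" for m
  proof -
    have dm: "(\<lambda>(x, \<nu>). dist \<nu> (CS m ! k) < 1 / Suc m) \<in> measurable (M \<Otimes>\<^sub>M ?MV) (count_space UNIV)" for k
    proof -
      have "(\<lambda>\<nu>. dist \<nu> (CS m ! k)) \<in> borel_measurable ?MV"
        by (intro borel_measurable_continuous_on_restrict continuous_intros)
      then have "(\<lambda>p. dist (snd p) (CS m ! k)) \<in> borel_measurable (M \<Otimes>\<^sub>M ?MV)"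
        by (rule measurable_compose[OF measurable_snd])
      then have "Measurable.pred (M \<Otimes>\<^sub>M ?MV) (\<lambda>p. dist (snd p) (CS m ! k) < 1 / Suc m)"
        by measurable
      then show ?thesis by (simp add: case_prod_beta)
    qed
    have lm: "(\<lambda>p. LEAST k. (\<lambda>(x, \<nu>). dist \<nu> (CS m ! k) < 1 / Suc m) p) \<in> measurable (M \<Otimes>\<^sub>M ?MV) (count_space UNIV)"
      by (rule measurable_Least) (rule dm)
    have fk: "(\<lambda>p. g (fst p) (CS m ! min k (length (CS m) - 1))) \<in> borel_measurable (M \<Otimes>\<^sub>M ?MV)" for k
    proof -
      have "CS m ! min k (length (CS m) - 1) \<in> V"
        using CS(1,2)[of m]
        by (metis (no_types, lifting) One_nat_def diff_less length_greater_0_conv less_one min.strict_coboundedI2 nth_mem subsetD)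
      then show ?thesis by (rule measurable_compose[OF measurable_fst meas])
    qed
    have "(\<lambda>p. (\<lambda>k p. g (fst p) (CS m ! min k (length (CS m) - 1)))
              ((\<lambda>p. LEAST k. (\<lambda>(x, \<nu>). dist \<nu> (CS m ! k) < 1 / Suc m) p) p) p) \<in> borel_measurable (M \<Otimes>\<^sub>M ?MV)"
      by (rule measurable_compose_countable'[OF fk lm]) auto
    then show ?thesis unfolding h_def sel_def by (simp add: case_prod_beta)
  qed
  show ?thesis
  proof (rule borel_measurable_LIMSEQ_real[OF _ hm])
    fix p assume p: "p \<in> space (M \<Otimes>\<^sub>M ?MV)"
    then obtain x \<nu> where xv: "p = (x, \<nu>)" "x \<in> space M" "\<nu> \<in> V"
      by (auto simp: space_pair_measure space_restrict_space)
    have d: "(\<lambda>m. dist (CS m ! sel m \<nu>) \<nu>) \<longlonglongrightarrow> 0"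
    proof (rule tendsto_sandwich[of "\<lambda>_. 0" _ _ "\<lambda>m. inverse (real (Suc m))"])
      show "\<forall>\<^sub>F m in sequentially. dist (CS m ! sel m \<nu>) \<nu> \<le> inverse (real (Suc m))"
        using sel[OF xv(3)] by (auto simp: dist_commute less_imp_le inverse_eq_divide)
    qed (auto simp del: of_nat_Suc intro: LIMSEQ_inverse_real_of_nat)
    have conv: "(\<lambda>m. CS m ! sel m \<nu>) \<longlonglongrightarrow> \<nu>" by (rule tendsto_dist_iff[THEN iffD2, OF d])
    have "((g x) \<circ> (\<lambda>m. CS m ! sel m \<nu>)) \<longlonglongrightarrow> g x \<nu>"
    proof -
      have H: "\<forall>y. \<forall>a\<in>V. (\<forall>n. y n \<in> V) \<and> y \<longlonglongrightarrow> a \<longrightarrow> (g x \<circ> y) \<longlonglongrightarrow> g x a"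
        using cont[OF xv(2)] unfolding continuous_on_sequentially by simp
      have A: "\<forall>n. CS n ! sel n \<nu> \<in> V" using selV by blast
      show ?thesis by (rule H[rule_format, OF xv(3) conjI[OF A conv]])
    qed
    then show "(\<lambda>m. h m p) \<longlonglongrightarrow> (\<lambda>(x, \<nu>). g x \<nu>) p" unfolding h_def xv(1) by (simp add: o_def)
  qed
qed


theorem theorem2:
  fixes n :: nat
    and V :: "'v::metric_space set"
    and MU :: "nat \<Rightarrow> 'u measure"
    and kern :: "nat \<Rightarrow> 'th \<Rightarrow> 'v \<Rightarrow> (real \<times> 'u) measure"
    and condT :: "nat \<Rightarrow> 'v \<Rightarrow> 'u \<Rightarrow> real measure"
    and \<theta>0 :: 'th and \<theta>s :: "nat \<Rightarrow> 'th" and \<nu>s :: "nat \<Rightarrow> 'v"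
    and Prior :: "'v measure measure"
    and post :: "nat \<Rightarrow> nat \<Rightarrow> (nat \<Rightarrow> 'u) \<Rightarrow> 'v measure"
  defines "MV \<equiv> restrict_space borel V"
  assumes A2: "compact V"
    and kern_prob: "\<And>K \<theta>. kern K \<theta> \<in> MV \<rightarrow>\<^sub>M prob_algebra (borel \<Otimes>\<^sub>M MU K)"
    and U_law: "\<And>K \<theta> \<theta>' \<nu>. \<nu> \<in> V \<Longrightarrow>
       distr (kern K \<theta> \<nu>) (MU K) snd = distr (kern K \<theta>' \<nu>) (MU K) snd"
    and condT_kernel: "\<And>K \<nu>. \<nu> \<in> V \<Longrightarrow> condT K \<nu> \<in> MU K \<rightarrow>\<^sub>M prob_algebra borel"
    and condT_disint: "\<And>K \<nu> A B. \<nu> \<in> V \<Longrightarrow> A \<in> sets borel \<Longrightarrow> B \<in> sets (MU K) \<Longrightarrow>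
       emeasure (kern K \<theta>0 \<nu>) (A \<times> B)
         = (\<integral>\<^sup>+ u. indicator B u * emeasure (condT K \<nu> u) A \<partial>distr (kern K \<theta>0 \<nu>) (MU K) snd)"
    and A1: "\<And>K \<nu> u. \<nu> \<in> V \<Longrightarrow> u \<in> space (MU K) \<Longrightarrow> absolutely_continuous lborel (condT K \<nu> u)"
    and A3: "\<forall>\<epsilon>>0. \<exists>\<delta>>0. \<forall>K t u \<nu> \<nu>'. u \<in> space (MU K) \<longrightarrow> \<nu> \<in> V \<longrightarrow> \<nu>' \<in> V \<longrightarrow>
       dist \<nu> \<nu>' < \<delta> \<longrightarrow> \<bar>oracle_pval condT K t u \<nu> - oracle_pval condT K t u \<nu>'\<bar> < \<epsilon>"
    and prior: "Prior \<in> space (prob_algebra (prob_algebra MV))"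
    and posterior: "\<And>K i. i < n \<Longrightarrow> is_posterior_version kern MU \<theta>0 MV Prior n K i (post K i)"
    and truth: "\<And>i. i < n \<Longrightarrow> \<nu>s i \<in> V"
    and concentration: "\<And>i \<delta>. i < n \<Longrightarrow> \<theta>s i = \<theta>0 \<Longrightarrow> \<delta> > 0 \<Longrightarrow>
       (\<lambda>K. \<integral>\<omega>. measure (post K i (Uvec n \<omega>)) {\<nu> \<in> V. dist \<nu> (\<nu>s i) > \<delta>}
               \<partial>data_law kern n \<theta>s \<nu>s K) \<longlonglongrightarrow> 0"
  shows "limsup (\<lambda>K. \<Squnion>i\<in>{i. i < n \<and> \<theta>s i = \<theta>0}. \<Squnion>\<alpha>\<in>{0..1::real}.
           ennreal \<bar>measure (data_law kern n \<theta>s \<nu>s K)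
              {\<omega> \<in> space (data_law kern n \<theta>s \<nu>s K).
                 pB_pval condT (post K i) K i (fst (\<omega> i)) (Uvec n \<omega>) \<le> \<alpha>} - \<alpha>\<bar>) = 0"
proof -
  have spMV: "space MV = V" unfolding MV_def by (simp add: space_restrict_space)
  define g where "g K t u \<nu> = oracle_pval condT K t u \<nu>" for K t u \<nu>
  define D where "D K = data_law kern n \<theta>s \<nu>s K" for K
  define N0 where "N0 = {i. i < n \<and> \<theta>s i = \<theta>0}"
  have condT_prob: "prob_space (condT K \<nu> u) \<and> sets (condT K \<nu> u) = sets borel"
    if "\<nu> \<in> V" "u \<in> space (MU K)" for K \<nu> u
    using measurable_space[OF condT_kernel[OF that(1)] that(2)] by (auto simp: space_prob_algebra)
  have g01: "0 \<le> g K t u \<nu> \<and> g K t u \<nu> \<le> 1" if "\<nu> \<in> V" "u \<in> space (MU K)" for K t u \<nu>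
    using condT_prob[OF that] unfolding g_def oracle_pval_def by (auto intro: prob_space.prob_le_1)
  have gcont: "continuous_on V (g K t u)" if u: "u \<in> space (MU K)" for K t u
    unfolding continuous_on_iff
  proof (intro ballI allI impI)
    fix x e assume x: "x \<in> V" and e: "(0::real) < e"
    obtain d where d: "d > 0" and dd: "\<forall>K t u \<nu> \<nu>'. u \<in> space (MU K) \<longrightarrow> \<nu> \<in> V \<longrightarrow> \<nu>' \<in> V \<longrightarrow>
       dist \<nu> \<nu>' < d \<longrightarrow> \<bar>oracle_pval condT K t u \<nu> - oracle_pval condT K t u \<nu>'\<bar> < e"
      using A3 e by blast
    show "\<exists>d>0. \<forall>x'\<in>V. dist x' x < d \<longrightarrow> dist (g K t u x') (g K t u x) < e"
      using d dd u x unfolding g_def dist_real_def by blast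
  qed
  have gmeas: "(\<lambda>y. g K (fst y) (snd y) c) \<in> borel_measurable (borel \<Otimes>\<^sub>M MU K)" if c: "c \<in> V" for K c
  proof -
    have L: "(\<lambda>y. condT K c (snd y)) \<in> (borel \<Otimes>\<^sub>M MU K) \<rightarrow>\<^sub>M prob_algebra borel"
      by (rule measurable_compose[OF measurable_snd condT_kernel[OF c]])
    have "(SIGMA y:space (borel \<Otimes>\<^sub>M MU K). {s::real. \<bar>fst y :: real\<bar> \<le> \<bar>s\<bar>})
        = {p \<in> space ((borel \<Otimes>\<^sub>M MU K) \<Otimes>\<^sub>M borel). \<bar>fst (fst p)\<bar> \<le> \<bar>snd p\<bar>}"
      by (auto simp: space_pair_measure)
    also have "\<dots> \<in> sets ((borel \<Otimes>\<^sub>M MU K) \<Otimes>\<^sub>M borel)"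
    proof -
      have "(\<lambda>p. fst (fst p)) \<in> borel_measurable ((borel \<Otimes>\<^sub>M MU K) \<Otimes>\<^sub>M borel)"
        by (rule measurable_compose[OF measurable_fst measurable_fst])
      then have 1: "(\<lambda>p. \<bar>fst (fst p)\<bar> :: real) \<in> borel_measurable ((borel \<Otimes>\<^sub>M MU K) \<Otimes>\<^sub>M borel)"
        by (rule borel_measurable_abs)
      have "(\<lambda>p. snd p) \<in> borel_measurable ((borel \<Otimes>\<^sub>M MU K) \<Otimes>\<^sub>M borel)"
        by (rule measurable_snd)
      then have 2: "(\<lambda>p. \<bar>snd p\<bar> :: real) \<in> borel_measurable ((borel \<Otimes>\<^sub>M MU K) \<Otimes>\<^sub>M borel)"
        by (rule borel_measurable_abs)
      show ?thesis by (rule borel_measurable_le[OF 1 2])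
    qed
    finally show ?thesis unfolding g_def oracle_pval_def
      by (rule measure_measurable_prob_algebra2[OF _ L])
  qed
  have key: "\<bar>measure (D K) {\<omega> \<in> space (D K). pB_pval condT (post K i) K i (fst (\<omega> i)) (Uvec n \<omega>) \<le> \<alpha>} - \<alpha>\<bar>
      \<le> \<epsilon> + \<eta> + (\<integral>\<omega>. measure (post K i (Uvec n \<omega>)) {\<nu> \<in> V. dist \<nu> (\<nu>s i) > \<delta> / 2} \<partial>D K) / \<eta>"
    if i: "i \<in> N0" and e: "\<epsilon> > 0" and d: "\<delta> > 0" and h: "\<eta> > 0" and a: "0 \<le> \<alpha>" "\<alpha> \<le> 1"
      and dd: "\<forall>K t u \<nu> \<nu>'. u \<in> space (MU K) \<longrightarrow> \<nu> \<in> V \<longrightarrow> \<nu>' \<in> V \<longrightarrow>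
       dist \<nu> \<nu>' < \<delta> \<longrightarrow> \<bar>oracle_pval condT K t u \<nu> - oracle_pval condT K t u \<nu>'\<bar> < \<epsilon>"
    for K i \<alpha> \<epsilon> \<delta> \<eta>
  proof -
    have iN: "i < n" and th: "\<theta>s i = \<theta>0" using i by (auto simp: N0_def)
    define \<nu>0 where "\<nu>0 = \<nu>s i"
    have \<nu>0V: "\<nu>0 \<in> V" using truth[OF iN] \<nu>0_def by simp
    define Mj where "Mj j = kern K (\<theta>s j) (\<nu>s j)" for j
    have Mj_pa: "Mj j \<in> space (prob_algebra (borel \<Otimes>\<^sub>M MU K))" if "j < n" for j
      unfolding Mj_def using measurable_space[OF kern_prob] truth[OF that] spMV by blast
    have Mj_s: "sets (Mj j) = sets (borel \<Otimes>\<^sub>M MU K)" and Mj_p: "prob_space (Mj j)" if "j < n" for j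
      using Mj_pa[OF that] by (auto simp: space_prob_algebra)
    have Dd: "D K = PiM {..<n} Mj" unfolding D_def data_law_def Mj_def by simp
    have Ds: "sets (D K) = sets (PiM {..<n} (\<lambda>_. borel \<Otimes>\<^sub>M MU K))"
      unfolding Dd by (rule sets_PiM_cong) (auto simp: Mj_s)
    interpret D: prob_space "D K" unfolding Dd by (rule prob_space_PiM) (auto simp: Mj_p)
    have compm: "(\<lambda>\<omega>. \<omega> j) \<in> D K \<rightarrow>\<^sub>M (borel \<Otimes>\<^sub>M MU K)" if "j < n" for j
    proof -
      have "(\<lambda>\<omega>. \<omega> j) \<in> D K \<rightarrow>\<^sub>M Mj j" unfolding Dd by (rule measurable_component_singleton) (use that in auto)
      then show ?thesis using measurable_cong_sets[OF refl Mj_s[OF that]] by blast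
    qed
    have Uvm: "Uvec n \<in> D K \<rightarrow>\<^sub>M PiM {..<n} (\<lambda>_. MU K)"
    proof -
      have "(\<lambda>\<omega>. \<lambda>j\<in>{..<n}. snd (\<omega> j)) \<in> D K \<rightarrow>\<^sub>M PiM {..<n} (\<lambda>_. MU K)"
        by (rule measurable_restrict) (auto intro: measurable_compose[OF compm measurable_snd])
      then show ?thesis unfolding Uvec_def[abs_def] .
    qed
    have UvecS: "Uvec n \<omega> \<in> space (PiM {..<n} (\<lambda>_. MU K))" if "\<omega> \<in> space (D K)" for \<omega>
      using measurable_space[OF Uvm that] .
    have Uvi: "Uvec n \<omega> i = snd (\<omega> i)" for \<omega> unfolding Uvec_def using iN by simp
    have \<omega>iS: "\<omega> i \<in> space (borel \<Otimes>\<^sub>M MU K)" if "\<omega> \<in> space (D K)" for \<omega>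
      using measurable_space[OF compm[OF iN] that] .
    have sndS: "snd (\<omega> i) \<in> space (MU K)" if "\<omega> \<in> space (D K)" for \<omega>
      using \<omega>iS[OF that] by (auto simp: space_pair_measure)
    have postm: "post K i \<in> PiM {..<n} (\<lambda>_. MU K) \<rightarrow>\<^sub>M prob_algebra MV"
      using posterior[OF iN, of K] unfolding is_posterior_version_def by auto
    have postpa: "post K i u \<in> space (prob_algebra MV)" if "u \<in> space (PiM {..<n} (\<lambda>_. MU K))" for u
      using measurable_space[OF postm that] .
    have postp: "prob_space (post K i u)" and posts: "sets (post K i u) = sets MV"
      and postsp: "space (post K i u) = V"
      if "u \<in> space (PiM {..<n} (\<lambda>_. MU K))" for u
      using postpa[OF that] spMV sets_eq_imp_space_eq[of "post K i u" MV]
      by (auto simp: space_prob_algebra)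
    define F where "F x = pB_pval condT (post K i) K i (fst x) (snd x)" for x :: "real \<times> (nat \<Rightarrow> 'u)"
    have Fm: "F \<in> borel_measurable (borel \<Otimes>\<^sub>M PiM {..<n} (\<lambda>_. MU K))"
    proof -
      let ?X = "(borel :: real measure) \<Otimes>\<^sub>M PiM {..<n} (\<lambda>_. MU K)"
      have xm: "(\<lambda>x. (fst x, snd x i)) \<in> ?X \<rightarrow>\<^sub>M (borel \<Otimes>\<^sub>M MU K)"
      proof -
        have iI: "i \<in> {..<n}" using iN by simp
        show ?thesis
          by (rule measurable_Pair[OF measurable_fst])
             (rule measurable_compose[OF measurable_snd measurable_component_singleton[OF iI]])
      qed
      have xs: "snd x i \<in> space (MU K)" if "x \<in> space ?X" for x
      proof -
        have "snd x \<in> space (PiM {..<n} (\<lambda>_. MU K))" using that by (simp add: space_pair_measure mem_Times_iff)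
        then show ?thesis using iN by (metis PiE_mem space_PiM lessThan_iff)
      qed
      have Gm: "(\<lambda>(x, \<nu>). g K (fst x) (snd x i) \<nu>) \<in> borel_measurable (?X \<Otimes>\<^sub>M restrict_space borel V)"
      proof (rule joint_meas[OF A2])
        show "V \<noteq> {}" using \<nu>0V by auto
        fix c assume "c \<in> V"
        show "(\<lambda>x. g K (fst x) (snd x i) c) \<in> borel_measurable ?X"
          using measurable_compose[OF xm gmeas[OF \<open>c \<in> V\<close>]] by simp
      next
        fix x assume "x \<in> space ?X"
        then show "continuous_on V (g K (fst x) (snd x i))" by (intro gcont xs)
      qed
      have Gm': "(\<lambda>(x, \<nu>). ennreal (g K (fst x) (snd x i) \<nu>)) \<in> borel_measurable (?X \<Otimes>\<^sub>M MV)"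
        using measurable_compose[OF Gm measurable_ennreal] unfolding MV_def by (simp add: case_prod_beta)
      have Lm: "(\<lambda>x. post K i (snd x)) \<in> ?X \<rightarrow>\<^sub>M subprob_algebra MV"
        by (rule measurable_compose[OF measurable_snd measurable_prob_algebraD[OF postm]])
      have NN: "(\<lambda>x. \<integral>\<^sup>+\<nu>. ennreal (g K (fst x) (snd x i) \<nu>) \<partial>post K i (snd x)) \<in> borel_measurable ?X"
        by (rule nn_integral_measurable_subprob_algebra2[OF Gm' Lm])
      show ?thesis
      proof (rule measurable_cong[THEN iffD1, OF _ borel_measurable_enn2real[OF NN]])
        fix x assume x: "x \<in> space ?X"
        have us: "snd x \<in> space (PiM {..<n} (\<lambda>_. MU K))" using x by (auto simp: space_pair_measure)
        have fm: "g K (fst x) (snd x i) \<in> borel_measurable (post K i (snd x))"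
          using borel_measurable_continuous_on_restrict[OF gcont[OF xs[OF x]]]
            measurable_cong_sets[OF posts[OF us] refl] unfolding MV_def by blast
        show "enn2real (\<integral>\<^sup>+\<nu>. ennreal (g K (fst x) (snd x i) \<nu>) \<partial>post K i (snd x)) = F x"
          unfolding F_def pB_pval_def g_def[symmetric]
          by (rule enn2real_nn_integral_eq_integral) (use fm g01 xs[OF x] postsp[OF us] in auto)
      qed
    qed
    define P where "P \<omega> = F (fst (\<omega> i), Uvec n \<omega>)" for \<omega>
    have Pm: "P \<in> borel_measurable (D K)"
      unfolding P_def
      by (rule measurable_compose[OF _ Fm], rule measurable_Pair)
         (auto intro: measurable_compose[OF compm[OF iN] measurable_fst] Uvm)
    define Or where "Or \<omega> = g K (fst (\<omega> i)) (snd (\<omega> i)) \<nu>0" for \<omega>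
    have Om: "Or \<in> borel_measurable (D K)"
      unfolding Or_def by (rule measurable_compose[OF compm[OF iN] gmeas[OF \<nu>0V]])
    define S where "S = {\<nu> \<in> V. dist \<nu> \<nu>0 > \<delta> / 2}"
    have SMV: "S \<in> sets MV"
    proof -
      have "S = V \<inter> {\<nu>. \<delta> / 2 < dist \<nu> \<nu>0}" unfolding S_def by auto
      moreover have "{\<nu>. \<delta> / 2 < dist \<nu> \<nu>0} \<in> sets borel"
        by (rule borel_open, rule open_Collect_less; intro continuous_intros)
      ultimately show ?thesis unfolding MV_def sets_restrict_space by blast
    qed
    define B where "B \<omega> = measure (post K i (Uvec n \<omega>)) S" for \<omega>
    have Bm: "B \<in> borel_measurable (D K)"
      unfolding B_def by (rule measurable_compose[OF Uvm measurable_compose[OF postm measurable_measure_prob_algebra[OF SMV]]])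
    have B01: "0 \<le> B \<omega> \<and> B \<omega> \<le> 1" if "\<omega> \<in> space (D K)" for \<omega>
      unfolding B_def using postp[OF UvecS[OF that]] by (auto intro: prob_space.prob_le_1)
    have pw: "\<bar>P \<omega> - Or \<omega>\<bar> \<le> \<epsilon> + B \<omega>" if \<omega>: "\<omega> \<in> space (D K)" for \<omega>
    proof -
      define u where "u = Uvec n \<omega>"
      define t where "t = fst (\<omega> i)"
      define ui where "ui = snd (\<omega> i)"
      define \<mu> where "\<mu> = post K i u"
      define f where "f \<nu> = g K t ui \<nu>" for \<nu>
      define c where "c = g K t ui \<nu>0"
      have us: "u \<in> space (PiM {..<n} (\<lambda>_. MU K))" unfolding u_def by (rule UvecS[OF \<omega>])
      have uis: "ui \<in> space (MU K)" unfolding ui_def by (rule sndS[OF \<omega>])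
      interpret \<mu>: prob_space \<mu> unfolding \<mu>_def by (rule postp[OF us])
      have spmu: "space \<mu> = V" unfolding \<mu>_def by (rule postsp[OF us])
      have fm: "f \<in> borel_measurable \<mu>"
        using borel_measurable_continuous_on_restrict[OF gcont[OF uis]]
          measurable_cong_sets[OF posts[OF us] refl] unfolding MV_def \<mu>_def f_def by blast
      have fi: "integrable \<mu> f"
        by (rule \<mu>.integrable_const_bound[where B=1]) (use fm g01 uis spmu in \<open>auto simp: f_def\<close>)
      have Sm: "S \<in> sets \<mu>" using SMV posts[OF us] unfolding \<mu>_def by simp
      have P_eq: "P \<omega> = (\<integral>\<nu>. f \<nu> \<partial>\<mu>)"
        unfolding P_def F_def pB_pval_def f_def g_def \<mu>_def u_def t_def ui_def by (simp add: Uvi)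
      have O_eq: "Or \<omega> = (\<integral>\<nu>. c \<partial>\<mu>)" unfolding Or_def c_def t_def ui_def by (simp add: \<mu>.prob_space)
      have "P \<omega> - Or \<omega> = (\<integral>\<nu>. f \<nu> - c \<partial>\<mu>)" unfolding P_eq O_eq by (rule Bochner_Integration.integral_diff[OF fi, symmetric]) simp
      then have "\<bar>P \<omega> - Or \<omega>\<bar> \<le> (\<integral>\<nu>. \<bar>f \<nu> - c\<bar> \<partial>\<mu>)"
        using integral_norm_bound[of \<mu> "\<lambda>\<nu>. f \<nu> - c"] by simp
      also have "\<dots> \<le> (\<integral>\<nu>. \<epsilon> + indicator S \<nu> \<partial>\<mu>)"
      proof (rule integral_mono)
        show "integrable \<mu> (\<lambda>\<nu>. \<bar>f \<nu> - c\<bar>)" using fi by (intro integrable_abs integrable_diff) auto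
        show "integrable \<mu> (\<lambda>\<nu>. \<epsilon> + indicator S \<nu>)" using Sm by (auto intro!: Bochner_Integration.integrable_add integrable_real_indicator simp: \<mu>.emeasure_finite less_top[symmetric])
        fix \<nu> assume "\<nu> \<in> space \<mu>"
        then have \<nu>V: "\<nu> \<in> V" using spmu by simp
        show "\<bar>f \<nu> - c\<bar> \<le> \<epsilon> + indicator S \<nu>"
        proof (cases "dist \<nu> \<nu>0 < \<delta>")
          case True
          then have "\<bar>f \<nu> - c\<bar> < \<epsilon>" using dd uis \<nu>V \<nu>0V unfolding f_def c_def g_def by blast
          then show ?thesis by (simp add: indicator_def)
        next
          case False
          then have "\<nu> \<in> S" unfolding S_def using \<nu>V d by auto
          moreover have "\<bar>f \<nu> - c\<bar> \<le> 1" using g01[OF \<nu>V uis, of t] g01[OF \<nu>0V uis, of t] unfolding f_def c_def by linarith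
          ultimately show ?thesis using e by simp
        qed
      qed
      also have "\<dots> = \<epsilon> + measure \<mu> S"
      proof -
        have "(\<integral>\<nu>. \<epsilon> + indicator S \<nu> \<partial>\<mu>) = (\<integral>\<nu>. \<epsilon> \<partial>\<mu>) + (\<integral>\<nu>. indicator S \<nu> \<partial>\<mu>)"
          by (rule Bochner_Integration.integral_add)
             (use Sm in \<open>auto intro!: integrable_real_indicator simp: \<mu>.emeasure_finite less_top[symmetric]\<close>)
        also have "\<dots> = \<epsilon> + measure \<mu> S"
          using sets.sets_into_space[OF Sm] by (simp add: \<mu>.prob_space Int_absorb2)
        finally show ?thesis .
      qed
      finally show ?thesis unfolding B_def \<mu>_def u_def .
    qed
    have unif: "measure (D K) {\<omega> \<in> space (D K). Or \<omega> \<le> a} = a" if a01: "0 \<le> a" "a \<le> 1" for a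
    proof -
      define E where "E = {z \<in> space (borel \<Otimes>\<^sub>M MU K). g K (fst z) (snd z) \<nu>0 \<le> a}"
      have Es: "E \<in> sets (borel \<Otimes>\<^sub>M MU K)" unfolding E_def using gmeas[OF \<nu>0V] by measurable
      have Mi: "Mj i = kern K \<theta>0 \<nu>0" unfolding Mj_def \<nu>0_def th ..
      have dist_i: "distr (D K) (Mj i) (\<lambda>\<omega>. \<omega> i) = Mj i"
        unfolding Dd by (rule distr_PiM_component) (use Mj_p iN in auto)
      have ci: "(\<lambda>\<omega>. \<omega> i) \<in> D K \<rightarrow>\<^sub>M Mj i"
        using compm[OF iN] measurable_cong_sets[OF refl Mj_s[OF iN]] by blast
      have spMi: "space (Mj i) = space (borel \<Otimes>\<^sub>M MU K)" using Mj_s[OF iN] by (rule sets_eq_imp_space_eq)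
      have "measure (D K) {\<omega> \<in> space (D K). Or \<omega> \<le> a} = measure (D K) ((\<lambda>\<omega>. \<omega> i) -` E \<inter> space (D K))"
        unfolding E_def Or_def using \<omega>iS by (intro arg_cong[where f="measure (D K)"]) auto
      also have "\<dots> = measure (distr (D K) (Mj i) (\<lambda>\<omega>. \<omega> i)) E"
        by (rule measure_distr[symmetric, OF ci]) (use Es Mj_s[OF iN] in simp)
      also have "\<dots> = measure (kern K \<theta>0 \<nu>0) E" using dist_i Mi by simp
      also have "\<dots> = a"
      proof -
        let ?U = "distr (kern K \<theta>0 \<nu>0) (MU K) snd"
        have kpa: "kern K \<theta>0 \<nu>0 \<in> space (prob_algebra (borel \<Otimes>\<^sub>M MU K))"
          using Mj_pa[OF iN] Mi by simp
        have "emeasure (kern K \<theta>0 \<nu>0) E = (\<integral>\<^sup>+ u. emeasure (condT K \<nu>0 u) {t. (t, u) \<in> E} \<partial>?U)"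
          by (rule disint_ext[OF kpa condT_kernel[OF \<nu>0V] condT_disint[OF \<nu>0V] Es])
        also have "\<dots> = (\<integral>\<^sup>+ u. ennreal a \<partial>?U)"
        proof (rule nn_integral_cong)
          fix u assume "u \<in> space ?U"
          then have u: "u \<in> space (MU K)" by simp
          have cp: "prob_space (condT K \<nu>0 u)" "sets (condT K \<nu>0 u) = sets borel"
            using condT_prob[OF \<nu>0V u] by auto
          have "{t. (t, u) \<in> E} = {t. measure (condT K \<nu>0 u) {s. \<bar>t\<bar> \<le> \<bar>s\<bar>} \<le> a}"
            unfolding E_def g_def oracle_pval_def using u by (auto simp: space_pair_measure)
          then have "measure (condT K \<nu>0 u) {t. (t, u) \<in> E} = a"
            using uniform_pval[OF cp A1[OF \<nu>0V u] a01] by simp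
          then show "emeasure (condT K \<nu>0 u) {t. (t, u) \<in> E} = ennreal a"
            using finite_measure.emeasure_eq_measure[of "condT K \<nu>0 u"] cp(1) unfolding prob_space_def by auto
        qed
        also have "\<dots> = ennreal a"
        proof -
          have "prob_space ?U"
          proof -
            have kp: "prob_space (kern K \<theta>0 \<nu>0)" and ks: "sets (kern K \<theta>0 \<nu>0) = sets (borel \<Otimes>\<^sub>M MU K)"
              using kpa by (auto simp: space_prob_algebra)
            have "snd \<in> kern K \<theta>0 \<nu>0 \<rightarrow>\<^sub>M MU K" by (subst measurable_cong_sets[OF ks refl]) simp
            then show ?thesis by (rule prob_space.prob_space_distr[OF kp])
          qed
          then have "emeasure ?U (space ?U) = 1" by (rule prob_space.emeasure_space_1)
          then show ?thesis by (simp add: nn_integral_const)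
        qed
        finally show ?thesis using a01 by (simp add: measure_def)
      qed
      finally show ?thesis .
    qed
    have unif_le: "measure (D K) {\<omega> \<in> space (D K). Or \<omega> \<le> a} \<le> a" if "0 \<le> a" for a
    proof (cases "a \<le> 1")
      case True then show ?thesis using unif that by simp
    next
      case False then show ?thesis using D.prob_le_1 by (smt (verit))
    qed
    have unif_ge: "a \<le> measure (D K) {\<omega> \<in> space (D K). Or \<omega> \<le> a}" if "a \<le> 1" for a
    proof (cases "0 \<le> a")
      case True then show ?thesis using unif that by simp
    next
      case False then show ?thesis by (smt (verit) measure_nonneg)
    qed
    define I where "I = (\<integral>\<omega>. B \<omega> \<partial>D K)"
    define SB where "SB = {\<omega> \<in> space (D K). \<eta> \<le> B \<omega>}"
    have SBs: "SB \<in> sets (D K)" unfolding SB_def using Bm by measurable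
    have markov: "measure (D K) SB \<le> I / \<eta>"
    proof -
      have "integrable (D K) B"
        by (rule D.integrable_const_bound[where B=1]) (use B01 Bm in auto)
      then show ?thesis unfolding SB_def I_def
        by (intro integral_Markov_inequality_measure[OF _ sets.top]) (use B01 h in auto)
    qed
    define SP where "SP = {\<omega> \<in> space (D K). P \<omega> \<le> \<alpha>}"
    have SPs: "SP \<in> sets (D K)" unfolding SP_def using Pm by measurable
    define SO where "SO a = {\<omega> \<in> space (D K). Or \<omega> \<le> a}" for a
    have SOs: "SO a \<in> sets (D K)" for a unfolding SO_def using Om by measurable
    have up: "measure (D K) SP \<le> \<alpha> + \<epsilon> + \<eta> + measure (D K) SB"
    proof -
      have "SP \<subseteq> SO (\<alpha> + \<epsilon> + \<eta>) \<union> SB"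
        unfolding SP_def SO_def SB_def using pw by force
      then have "measure (D K) SP \<le> measure (D K) (SO (\<alpha> + \<epsilon> + \<eta>) \<union> SB)"
        by (intro D.finite_measure_mono) (use SOs SBs in auto)
      also have "\<dots> \<le> measure (D K) (SO (\<alpha> + \<epsilon> + \<eta>)) + measure (D K) SB"
        by (rule measure_Un_le[OF SOs SBs])
      also have "measure (D K) (SO (\<alpha> + \<epsilon> + \<eta>)) \<le> \<alpha> + \<epsilon> + \<eta>"
        unfolding SO_def by (rule unif_le) (use a e h in auto)
      finally show ?thesis by simp
    qed
    have lo: "\<alpha> - \<epsilon> - \<eta> \<le> measure (D K) SP + measure (D K) SB"
    proof -
      have "SO (\<alpha> - \<epsilon> - \<eta>) \<subseteq> SP \<union> SB"
        unfolding SP_def SO_def SB_def using pw by force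
      then have "measure (D K) (SO (\<alpha> - \<epsilon> - \<eta>)) \<le> measure (D K) (SP \<union> SB)"
        by (intro D.finite_measure_mono) (use SPs SBs in auto)
      also have "\<dots> \<le> measure (D K) SP + measure (D K) SB"
        by (rule measure_Un_le[OF SPs SBs])
      also have "\<alpha> - \<epsilon> - \<eta> \<le> measure (D K) (SO (\<alpha> - \<epsilon> - \<eta>))"
        unfolding SO_def by (rule unif_ge) (use a e h in auto)
      finally show ?thesis by simp
    qed
    have "\<bar>measure (D K) SP - \<alpha>\<bar> \<le> \<epsilon> + \<eta> + I / \<eta>"
      using up lo markov measure_nonneg[of "D K" SB] by linarith
    moreover have "SP = {\<omega> \<in> space (D K). pB_pval condT (post K i) K i (fst (\<omega> i)) (Uvec n \<omega>) \<le> \<alpha>}"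
      unfolding SP_def P_def F_def by simp
    moreover have "I = (\<integral>\<omega>. measure (post K i (Uvec n \<omega>)) {\<nu> \<in> V. dist \<nu> (\<nu>s i) > \<delta> / 2} \<partial>D K)"
      unfolding I_def B_def S_def \<nu>0_def ..
    ultimately show ?thesis by simp
  qed
  have ev: "eventually (\<lambda>K. (\<Squnion>i\<in>N0. \<Squnion>\<alpha>\<in>{0..1::real}.
           ennreal \<bar>measure (D K) {\<omega> \<in> space (D K).
                 pB_pval condT (post K i) K i (fst (\<omega> i)) (Uvec n \<omega>) \<le> \<alpha>} - \<alpha>\<bar>) \<le> ennreal (3 * \<epsilon>)) sequentially"
    if e: "\<epsilon> > 0" for \<epsilon>
  proof -
    obtain \<delta> where d: "\<delta> > 0" and dd: "\<forall>K t u \<nu> \<nu>'. u \<in> space (MU K) \<longrightarrow> \<nu> \<in> V \<longrightarrow> \<nu>' \<in> V \<longrightarrow>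
       dist \<nu> \<nu>' < \<delta> \<longrightarrow> \<bar>oracle_pval condT K t u \<nu> - oracle_pval condT K t u \<nu>'\<bar> < \<epsilon>"
      using A3 e by blast
    have fin: "finite N0" unfolding N0_def by simp
    have "\<forall>\<^sub>F K in sequentially. \<forall>i\<in>N0.
       (\<integral>\<omega>. measure (post K i (Uvec n \<omega>)) {\<nu> \<in> V. dist \<nu> (\<nu>s i) > \<delta> / 2} \<partial>D K) < \<epsilon> * \<epsilon>"
    proof (rule eventually_ball_finite[OF fin], rule ballI)
      fix i assume "i \<in> N0"
      then have "(\<lambda>K. \<integral>\<omega>. measure (post K i (Uvec n \<omega>)) {\<nu> \<in> V. dist \<nu> (\<nu>s i) > \<delta> / 2} \<partial>D K) \<longlonglongrightarrow> 0"
        unfolding D_def by (intro concentration) (use d \<open>i \<in> N0\<close> in \<open>auto simp: N0_def\<close>)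
      then show "\<forall>\<^sub>F K in sequentially. (\<integral>\<omega>. measure (post K i (Uvec n \<omega>)) {\<nu> \<in> V. dist \<nu> (\<nu>s i) > \<delta> / 2} \<partial>D K) < \<epsilon> * \<epsilon>"
        using e by (intro order_tendstoD(2)) auto
    qed
    then show ?thesis
    proof eventually_elim
      case (elim K)
      show ?case
      proof (intro SUP_least)
        fix i \<alpha> assume i: "i \<in> N0" and a: "\<alpha> \<in> {0..1::real}"
        have "\<bar>measure (D K) {\<omega> \<in> space (D K). pB_pval condT (post K i) K i (fst (\<omega> i)) (Uvec n \<omega>) \<le> \<alpha>} - \<alpha>\<bar>
          \<le> \<epsilon> + \<epsilon> + (\<integral>\<omega>. measure (post K i (Uvec n \<omega>)) {\<nu> \<in> V. dist \<nu> (\<nu>s i) > \<delta> / 2} \<partial>D K) / \<epsilon>"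
          using key[OF i e d e _ _ dd] a by auto
        also have "\<dots> \<le> 3 * \<epsilon>"
        proof -
          have "(\<integral>\<omega>. measure (post K i (Uvec n \<omega>)) {\<nu> \<in> V. dist \<nu> (\<nu>s i) > \<delta> / 2} \<partial>D K) < \<epsilon> * \<epsilon>"
            using elim i by blast
          then have "(\<integral>\<omega>. measure (post K i (Uvec n \<omega>)) {\<nu> \<in> V. dist \<nu> (\<nu>s i) > \<delta> / 2} \<partial>D K) / \<epsilon> \<le> \<epsilon>"
            using e by (simp add: divide_le_eq less_imp_le)
          then show ?thesis by linarith
        qed
        finally show "ennreal \<bar>measure (D K) {\<omega> \<in> space (D K). pB_pval condT (post K i) K i (fst (\<omega> i)) (Uvec n \<omega>) \<le> \<alpha>} - \<alpha>\<bar>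
           \<le> ennreal (3 * \<epsilon>)" by (rule ennreal_leI)
      qed
    qed
  qed
  have "limsup (\<lambda>K. \<Squnion>i\<in>N0. \<Squnion>\<alpha>\<in>{0..1::real}.
           ennreal \<bar>measure (D K) {\<omega> \<in> space (D K).
                 pB_pval condT (post K i) K i (fst (\<omega> i)) (Uvec n \<omega>) \<le> \<alpha>} - \<alpha>\<bar>) \<le> 0"
  proof (rule ennreal_le_epsilon)
    fix e :: real assume "0 < e"
    then have "limsup (\<lambda>K. \<Squnion>i\<in>N0. \<Squnion>\<alpha>\<in>{0..1::real}.
           ennreal \<bar>measure (D K) {\<omega> \<in> space (D K).
                 pB_pval condT (post K i) K i (fst (\<omega> i)) (Uvec n \<omega>) \<le> \<alpha>} - \<alpha>\<bar>) \<le> ennreal (3 * (e / 3))"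
      by (intro Limsup_bounded ev) auto
    then show "limsup (\<lambda>K. \<Squnion>i\<in>N0. \<Squnion>\<alpha>\<in>{0..1::real}.
           ennreal \<bar>measure (D K) {\<omega> \<in> space (D K).
                 pB_pval condT (post K i) K i (fst (\<omega> i)) (Uvec n \<omega>) \<le> \<alpha>} - \<alpha>\<bar>) \<le> 0 + ennreal e" by simp
  qed
  then show ?thesis unfolding D_def N0_def by simp
qed

end
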